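(* Let $\alpha>0$, $K(x)=\exp(-x^\alpha)$ and, for $\sigma>0$, $K_\sigma(x)=K(x/\sigma)$. Let $\mathcal{X}=\{\mathbf{x}_1,\dots,\mathbf{x}_n\}\subset\mathbb{R}^d$ and suppose there is a partition of $\mathcal{X}$ into $\mathcal{C}_1,\dots,\mathcal{C}_k$ such that $\min_{l\in[k]}|\mathcal{C}_l|\ge2$ and $\min_{m\in[k]}d(\mathcal{C}_m,\mathcal{X}\setminus\mathcal{C}_m)^\alpha-3\max_{l\in[k]}\delta_l^\alpha=\delta>0$, where $\mathcal{C}_l$ is connected at distance $\delta_l$ for each $l\in[k]$. Let $\mathbf{U}$ have as columns the eigenvectors of the normalised Laplacian of the graph $(\mathcal{X},K_\sigma)$ with reflexive edges removed, and let $\mathbf{D}$ be the corresponding degree matrix. Then, for $0<\sigma<\delta^{1/\alpha}\log(13^8k^9n^z)^{-1/\alpha}$ with $z\ge10$, $$\max_{\substack{i,j,g,h\in[n],\,l,m\in[k]:\\ \mathbf{x}_i,\mathbf{x}_j\in\mathcal{C}_l,\\ \mathbf{x}_g\in\mathcal{C}_m,\ \mathbf{x}_h\notin\mathcal{C}_m}}\frac{\|\mathbf{D}_{ii}^{-1/2}\mathbf{U}_{i,1:k}-\mathbf{D}_{jj}^{-1/2}\mathbf{U}_{j,1:k}\|}{\|\mathbf{D}_{gg}^{-1/2}\mathbf{U}_{g,1:k}-\mathbf{D}_{hh}^{-1/2}\mathbf{U}_{h,1:k}\|}\le n^{(4-z)/2}.$$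
   Context: $[n]=\{1,\dots,n\}$; $\|\cdot\|$ is the Euclidean norm. For sets $S,U$, $d(S,U)=\inf_{\mathbf{x}\in S,\mathbf{y}\in U}\|\mathbf{x}-\mathbf{y}\|$. A set $S$ is connected at distance $\delta$ if there is no partition of $S$ into $S_1,S_2$ with $d(S_1,S_2)>\delta$. The graph with reflexive edges removed has affinity matrix $\mathbf{A}_0$ with $(\mathbf{A}_0)_{ij}=K_\sigma(\|\mathbf{x}_i-\mathbf{x}_j\|)$ for $i\ne j$ and $(\mathbf{A}_0)_{ii}=0$, degree matrix $\mathbf{D}=\mathrm{diag}(\sum_j(\mathbf{A}_0)_{ij})$, and normalised Laplacian $\mathbf{I}-\mathbf{D}^{-1/2}\mathbf{A}_0\mathbf{D}^{-1/2}$. "The eigenvectors" means an orthonormal eigenbasis arranged as columns with eigenvalues in nondecreasing order; $\mathbf{U}_{i,1:k}$ is the first $k$ entries of row $i$. *)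

theory Defs
  imports "HOL-Analysis.Analysis"
begin

definition K_sigma :: "real \<Rightarrow> real \<Rightarrow> real \<Rightarrow> real" where
  "K_sigma \<alpha> \<sigma> t = exp (- ((t / \<sigma>) powr \<alpha>))"

definition affinity :: "real \<Rightarrow> real \<Rightarrow> (nat \<Rightarrow> 'a::metric_space) \<Rightarrow> nat \<Rightarrow> nat \<Rightarrow> real" where
  "affinity \<alpha> \<sigma> x i j = (if i = j then 0 else K_sigma \<alpha> \<sigma> (dist (x i) (x j)))"

definition degree :: "real \<Rightarrow> real \<Rightarrow> (nat \<Rightarrow> 'a::metric_space) \<Rightarrow> nat \<Rightarrow> nat \<Rightarrow> real" where
  "degree \<alpha> \<sigma> x n i = (\<Sum>j<n. affinity \<alpha> \<sigma> x i j)"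

definition norm_laplacian :: "real \<Rightarrow> real \<Rightarrow> (nat \<Rightarrow> 'a::metric_space) \<Rightarrow> nat \<Rightarrow> nat \<Rightarrow> nat \<Rightarrow> real" where
  "norm_laplacian \<alpha> \<sigma> x n i j =
     (if i = j then 1 else 0)
     - affinity \<alpha> \<sigma> x i j / (sqrt (degree \<alpha> \<sigma> x n i) * sqrt (degree \<alpha> \<sigma> x n j))"

definition ordered_eigenbasis ::
  "nat \<Rightarrow> (nat \<Rightarrow> nat \<Rightarrow> real) \<Rightarrow> (nat \<Rightarrow> nat \<Rightarrow> real) \<Rightarrow> (nat \<Rightarrow> real) \<Rightarrow> bool" where
  "ordered_eigenbasis n L U lam \<longleftrightarrow>
     (\<forall>c<n. \<forall>c'<n. (\<Sum>i<n. U i c * U i c') = (if c = c' then 1 else 0)) \<and>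
     (\<forall>c<n. \<forall>i<n. (\<Sum>j<n. L i j * U j c) = lam c * U i c) \<and>
     (\<forall>c<n. \<forall>c'<n. c \<le> c' \<longrightarrow> lam c \<le> lam c')"

definition connected_at_distance :: "'a::metric_space set \<Rightarrow> real \<Rightarrow> bool" where
  "connected_at_distance S \<delta> \<longleftrightarrow>
     \<not> (\<exists>S1 S2. S1 \<noteq> {} \<and> S2 \<noteq> {} \<and> S1 \<union> S2 = S \<and> S1 \<inter> S2 = {} \<and> setdist S1 S2 > \<delta>)"

definition emb_dist :: "nat \<Rightarrow> (nat \<Rightarrow> real) \<Rightarrow> (nat \<Rightarrow> nat \<Rightarrow> real) \<Rightarrow> nat \<Rightarrow> nat \<Rightarrow> real" where
  "emb_dist k D U i j = sqrt (\<Sum>c<k. (U i c / sqrt (D i) - U j c / sqrt (D j))\<^sup>2)"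

end

theory Submission
  imports Defs "Jordan_Normal_Form.Determinant" "HOL-Library.Transitive_Closure_Table"
begin

lemma orth_complete:
  fixes U :: "nat \<Rightarrow> nat \<Rightarrow> real"
  assumes "\<forall>c<n. \<forall>c'<n. (\<Sum>i<n. U i c * U i c') = (if c = c' then 1 else 0)"
    and "i < n" "j < n"
  shows "(\<Sum>c<n. U i c * U j c) = (if i = j then 1 else 0)"
proof -
  define M where "M = Matrix.mat n n (\<lambda>(i,c). U i c)"
  have M: "M \<in> carrier_mat n n" unfolding M_def by simp
  have "transpose_mat M * M = 1\<^sub>m n"
    using assms(1) by (auto simp: M_def scalar_prod_def Matrix.mat_eq_iff atLeast0LessThan)
  then have "M * transpose_mat M = 1\<^sub>m n"
    using mat_mult_left_right_inverse[of "transpose_mat M" n M] M by auto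
  then have "(M * transpose_mat M) $$ (i,j) = 1\<^sub>m n $$ (i,j)" by simp
  then show ?thesis using assms(2,3)
    by (simp add: M_def scalar_prod_def atLeast0LessThan)
qed

lemma quadform:
  fixes A :: "nat \<Rightarrow> nat \<Rightarrow> real" and D \<phi> :: "nat \<Rightarrow> real"
  assumes symm: "\<forall>i<n. \<forall>j<n. A i j = A j i"
    and Ddef: "\<forall>i<n. D i = (\<Sum>j<n. A i j)"
    and Dpos: "\<forall>i<n. D i > 0"
  shows "(\<Sum>i<n. \<Sum>j<n. (sqrt (D i) * \<phi> i) * ((if i = j then 1 else 0) - A i j / (sqrt (D i) * sqrt (D j))) * (sqrt (D j) * \<phi> j))
       = (\<Sum>i<n. \<Sum>j<n. A i j * (\<phi> i - \<phi> j)^2) / 2"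
proof -
  have e1: "(\<Sum>i<n. \<Sum>j<n. (sqrt (D i) * \<phi> i) * ((if i = j then 1 else 0) - A i j / (sqrt (D i) * sqrt (D j))) * (sqrt (D j) * \<phi> j))
      = (\<Sum>i<n. D i * \<phi> i ^ 2) - (\<Sum>i<n. \<Sum>j<n. A i j * \<phi> i * \<phi> j)"
  proof -
    have "(\<Sum>i<n. \<Sum>j<n. (sqrt (D i) * \<phi> i) * ((if i = j then 1 else 0) - A i j / (sqrt (D i) * sqrt (D j))) * (sqrt (D j) * \<phi> j))
        = (\<Sum>i<n. D i * \<phi> i ^ 2 - (\<Sum>j<n. A i j * \<phi> i * \<phi> j))"
    proof (rule sum.cong[OF refl])
      fix i assume i: "i \<in> {..<n}"
      have "(\<Sum>j<n. (sqrt (D i) * \<phi> i) * ((if i = j then 1 else 0) - A i j / (sqrt (D i) * sqrt (D j))) * (sqrt (D j) * \<phi> j))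
          = (\<Sum>j<n. (if i = j then D i * \<phi> i ^ 2 else 0) - A i j * \<phi> i * \<phi> j)"
      proof (rule sum.cong[OF refl])
        fix j assume j: "j \<in> {..<n}"
        have "D i > 0" "D j > 0" using i j Dpos by auto
        then show "(sqrt (D i) * \<phi> i) * ((if i = j then 1 else 0) - A i j / (sqrt (D i) * sqrt (D j))) * (sqrt (D j) * \<phi> j)
           = (if i = j then D i * \<phi> i ^ 2 else 0) - A i j * \<phi> i * \<phi> j"
          by (auto simp: field_simps power2_eq_square real_sqrt_mult[symmetric])
      qed
      also have "\<dots> = D i * \<phi> i ^ 2 - (\<Sum>j<n. A i j * \<phi> i * \<phi> j)"
        using i by (simp add: sum_subtractf)
      finally show "(\<Sum>j<n. (sqrt (D i) * \<phi> i) * ((if i = j then 1 else 0) - A i j / (sqrt (D i) * sqrt (D j))) * (sqrt (D j) * \<phi> j))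
          = D i * \<phi> i ^ 2 - (\<Sum>j<n. A i j * \<phi> i * \<phi> j)" .
    qed
    then show ?thesis by (simp add: sum_subtractf)
  qed
  have e2: "(\<Sum>i<n. \<Sum>j<n. A i j * (\<phi> i - \<phi> j)^2)
     = (\<Sum>i<n. \<Sum>j<n. A i j * \<phi> i ^ 2) + (\<Sum>i<n. \<Sum>j<n. A i j * \<phi> j ^ 2) - 2 * (\<Sum>i<n. \<Sum>j<n. A i j * \<phi> i * \<phi> j)"
    by (simp add: power2_diff algebra_simps sum.distrib sum_subtractf sum_distrib_left)
  have e3: "(\<Sum>i<n. \<Sum>j<n. A i j * \<phi> i ^ 2) = (\<Sum>i<n. D i * \<phi> i ^ 2)"
    using Ddef by (simp add: sum_distrib_right)
  have e4: "(\<Sum>i<n. \<Sum>j<n. A i j * \<phi> j ^ 2) = (\<Sum>i<n. \<Sum>j<n. A i j * \<phi> i ^ 2)"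
  proof -
    have "(\<Sum>i<n. \<Sum>j<n. A i j * \<phi> j ^ 2) = (\<Sum>j<n. \<Sum>i<n. A i j * \<phi> j ^ 2)"
      by (rule sum.swap)
    also have "\<dots> = (\<Sum>j<n. \<Sum>i<n. A j i * \<phi> j ^ 2)"
      using symm by (intro sum.cong refl) auto
    finally show ?thesis .
  qed
  show ?thesis using e1 e2 e3 e4 by simp
qed

lemma spec_expand:
  fixes U L :: "nat \<Rightarrow> nat \<Rightarrow> real" and lam y :: "nat \<Rightarrow> real"
  assumes ortho: "\<forall>c<n. \<forall>c'<n. (\<Sum>i<n. U i c * U i c') = (if c = c' then 1 else 0)"
    and eigen: "\<forall>c<n. \<forall>i<n. (\<Sum>j<n. L i j * U j c) = lam c * U i c"
  shows "(\<Sum>c<n. (\<Sum>i<n. y i * U i c)^2) = (\<Sum>i<n. y i ^ 2)"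
    and "(\<Sum>c<n. lam c * (\<Sum>i<n. y i * U i c)^2) = (\<Sum>i<n. \<Sum>j<n. y i * L i j * y j)"
proof -
  have comp: "\<And>i j. i < n \<Longrightarrow> j < n \<Longrightarrow> (\<Sum>c<n. U i c * U j c) = (if i = j then 1 else 0)"
    using orth_complete[OF ortho] by blast
  define a where "a c = (\<Sum>i<n. y i * U i c)" for c
  have yexp: "y j = (\<Sum>c<n. a c * U j c)" if j: "j < n" for j
  proof -
    have "(\<Sum>c<n. a c * U j c) = (\<Sum>c<n. \<Sum>i<n. y i * (U i c * U j c))"
      by (simp add: a_def sum_distrib_right mult.assoc)
    also have "\<dots> = (\<Sum>i<n. y i * (\<Sum>c<n. U i c * U j c))"
      by (subst sum.swap) (simp add: sum_distrib_left)
    also have "\<dots> = (\<Sum>i<n. if i = j then y i else 0)"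
      using comp j by (intro sum.cong refl) auto
    also have "\<dots> = y j" using j by simp
    finally show ?thesis by simp
  qed
  show "(\<Sum>c<n. (\<Sum>i<n. y i * U i c)^2) = (\<Sum>i<n. y i ^ 2)"
  proof -
    have "(\<Sum>c<n. (\<Sum>i<n. y i * U i c)^2) = (\<Sum>c<n. a c * (\<Sum>j<n. y j * U j c))"
      by (simp add: a_def power2_eq_square)
    also have "\<dots> = (\<Sum>j<n. y j * (\<Sum>c<n. a c * U j c))"
    proof -
      have "(\<Sum>c<n. a c * (\<Sum>j<n. y j * U j c)) = (\<Sum>c<n. \<Sum>j<n. y j * (a c * U j c))"
        by (simp add: sum_distrib_left algebra_simps)
      also have "\<dots> = (\<Sum>j<n. \<Sum>c<n. y j * (a c * U j c))" by (rule sum.swap)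
      also have "\<dots> = (\<Sum>j<n. y j * (\<Sum>c<n. a c * U j c))" by (simp add: sum_distrib_left)
      finally show ?thesis .
    qed
    also have "\<dots> = (\<Sum>j<n. y j ^ 2)"
      using yexp by (intro sum.cong refl) (auto simp: power2_eq_square)
    finally show ?thesis .
  qed
  show "(\<Sum>c<n. lam c * (\<Sum>i<n. y i * U i c)^2) = (\<Sum>i<n. \<Sum>j<n. y i * L i j * y j)"
  proof -
    have Ly: "(\<Sum>j<n. L i j * y j) = (\<Sum>c<n. a c * lam c * U i c)" if i: "i < n" for i
    proof -
      have "(\<Sum>j<n. L i j * y j) = (\<Sum>j<n. \<Sum>c<n. a c * (L i j * U j c))"
        using yexp by (intro sum.cong refl) (auto simp: sum_distrib_left algebra_simps)
      also have "\<dots> = (\<Sum>c<n. a c * (\<Sum>j<n. L i j * U j c))"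
        by (subst sum.swap) (simp add: sum_distrib_left)
      also have "\<dots> = (\<Sum>c<n. a c * lam c * U i c)"
        using eigen i by (intro sum.cong refl) auto
      finally show ?thesis .
    qed
    have "(\<Sum>i<n. \<Sum>j<n. y i * L i j * y j) = (\<Sum>i<n. y i * (\<Sum>j<n. L i j * y j))"
      by (simp add: sum_distrib_left mult.assoc)
    also have "\<dots> = (\<Sum>i<n. y i * (\<Sum>c<n. a c * lam c * U i c))"
      using Ly by (intro sum.cong refl) auto
    also have "\<dots> = (\<Sum>c<n. a c * lam c * (\<Sum>i<n. y i * U i c))"
    proof -
      have "(\<Sum>i<n. y i * (\<Sum>c<n. a c * lam c * U i c)) = (\<Sum>i<n. \<Sum>c<n. a c * lam c * (y i * U i c))"
        by (simp add: sum_distrib_left algebra_simps)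
      also have "\<dots> = (\<Sum>c<n. \<Sum>i<n. a c * lam c * (y i * U i c))" by (rule sum.swap)
      also have "\<dots> = (\<Sum>c<n. a c * lam c * (\<Sum>i<n. y i * U i c))" by (simp add: sum_distrib_left)
      finally show ?thesis .
    qed
    also have "\<dots> = (\<Sum>c<n. lam c * (\<Sum>i<n. y i * U i c)^2)"
      by (simp add: a_def power2_eq_square mult_ac)
    finally show ?thesis by simp
  qed
qed

lemma step_ineq:
  fixes u v w \<rho> R L :: real
  assumes "L > 0" "w * u^2 \<le> \<rho>" "w * v^2 \<le> L * R" "w > 0"
  shows "w * (u + v)^2 \<le> (L + 1) * (\<rho> + R)"
proof -
  have "0 \<le> (L * u - v)^2" by simp
  then have h: "L * (u + v)^2 \<le> L * (L + 1) * u^2 + (L + 1) * v^2"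
    by (simp add: power2_eq_square algebra_simps)
  have "L * (w * (u + v)^2) = w * (L * (u + v)^2)" by simp
  also have "\<dots> \<le> w * (L * (L + 1) * u^2 + (L + 1) * v^2)"
    using h assms(4) by (intro mult_left_mono) auto
  also have "\<dots> = L * (L + 1) * (w * u^2) + (L + 1) * (w * v^2)" by (simp add: algebra_simps)
  also have "\<dots> \<le> L * (L + 1) * \<rho> + (L + 1) * (L * R)"
    using assms by (intro add_mono mult_left_mono) auto
  also have "\<dots> = L * ((L + 1) * (\<rho> + R))" by (simp add: algebra_simps)
  finally show ?thesis using assms(1) by simp
qed

lemma path_bound:
  fixes A :: "nat \<Rightarrow> nat \<Rightarrow> real" and f :: "nat \<Rightarrow> real"
  assumes "rtrancl_path r a xs b" "distinct (a # xs)"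
    and rA: "\<And>p q. r p q \<Longrightarrow> p < n \<and> q < n \<and> w \<le> A p q"
    and Anonneg: "\<And>p q. p < n \<Longrightarrow> q < n \<Longrightarrow> 0 \<le> A p q"
    and wpos: "w > 0"
  shows "w * (f a - f b)^2 \<le> real (length xs) * (\<Sum>i\<in>set (a # xs). \<Sum>j<n. A i j * (f i - f j)^2)"
  using assms(1,2)
proof (induction rule: rtrancl_path.induct)
  case (base x)
  then show ?case by simp
next
  case (step x y ys z)
  have d: "distinct (y # ys)" "x \<notin> set (y # ys)" using step.prems by auto
  have IH: "w * (f y - f z)^2 \<le> real (length ys) * (\<Sum>i\<in>set (y # ys). \<Sum>j<n. A i j * (f i - f j)^2)"
    using step.IH d by auto
  have rxy: "x < n" "y < n" "w \<le> A x y" using rA[OF step.hyps(1)] by auto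
  define \<rho> where "\<rho> = (\<Sum>j<n. A x j * (f x - f j)^2)"
  define R where "R = (\<Sum>i\<in>set (y # ys). \<Sum>j<n. A i j * (f i - f j)^2)"
  have "w * (f x - f y)^2 \<le> A x y * (f x - f y)^2"
    using rxy by (intro mult_right_mono) auto
  also have "\<dots> \<le> \<rho>" unfolding \<rho>_def
    using rxy Anonneg by (intro member_le_sum) auto
  finally have u: "w * (f x - f y)^2 \<le> \<rho>" .
  have sumeq: "(\<Sum>i\<in>set (x # y # ys). \<Sum>j<n. A i j * (f i - f j)^2) = \<rho> + R"
    unfolding \<rho>_def R_def using d(2) by (simp only: set_simps(2)[of x "y # ys"], subst sum.insert) auto
  show ?case
  proof (cases ys)
    case Nil
    then have "y = z" using step.hyps(2) by (auto elim: rtrancl_path.cases)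
    have "R \<ge> 0" unfolding R_def
      using Anonneg \<open>y < n\<close> step.hyps(2) Nil
      by (intro sum_nonneg) (auto elim: rtrancl_path.cases)
    then show ?thesis using u sumeq Nil \<open>y = z\<close> by simp
  next
    case (Cons a list)
    then have L: "real (length ys) > 0" by simp
    have "w * (f x - f z)^2 = w * ((f x - f y) + (f y - f z))^2" by simp
    also have "\<dots> \<le> (real (length ys) + 1) * (\<rho> + R)"
      using step_ineq[OF L u _ wpos, of "f y - f z" R] IH unfolding R_def by blast
    finally show ?thesis using sumeq by (simp add: add.commute)
  qed
qed

lemma var_ident:
  fixes D h :: "nat \<Rightarrow> real"
  shows "(\<Sum>i\<in>I. D i) * (\<Sum>i\<in>I. D i * h i ^ 2) - (\<Sum>i\<in>I. D i * h i)^2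
       = (\<Sum>i\<in>I. D i) * (\<Sum>i\<in>I. D i * (h i - a)^2) - ((\<Sum>i\<in>I. D i * h i) - a * (\<Sum>i\<in>I. D i))^2"
proof -
  have "(\<Sum>i\<in>I. D i * (h i - a)^2) = (\<Sum>i\<in>I. D i * h i ^ 2 - 2 * a * (D i * h i) + a^2 * D i)"
    by (intro sum.cong refl) (simp add: power2_diff algebra_simps)
  also have "\<dots> = (\<Sum>i\<in>I. D i * h i ^ 2) - 2 * a * (\<Sum>i\<in>I. D i * h i) + a^2 * (\<Sum>i\<in>I. D i)"
    by (simp add: sum.distrib sum_subtractf sum_distrib_left)
  finally have e: "(\<Sum>i\<in>I. D i * (h i - a)^2) = (\<Sum>i\<in>I. D i * h i ^ 2) - 2 * a * (\<Sum>i\<in>I. D i * h i) + a^2 * (\<Sum>i\<in>I. D i)" .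
  show ?thesis unfolding e
    by (simp add: power2_eq_square algebra_simps)
qed
lemma var_le:
  fixes D h :: "nat \<Rightarrow> real"
  shows "(\<Sum>i\<in>I. D i) * (\<Sum>i\<in>I. D i * h i ^ 2) - (\<Sum>i\<in>I. D i * h i)^2
       \<le> (\<Sum>i\<in>I. D i) * (\<Sum>i\<in>I. D i * (h i - a)^2)"
  using var_ident[of D I h a] by simp

lemma wcs:
  fixes D h :: "nat \<Rightarrow> real"
  assumes "finite I" "\<And>i. i \<in> I \<Longrightarrow> D i \<ge> 0"
  shows "(\<Sum>i\<in>I. D i * h i)^2 \<le> (\<Sum>i\<in>I. D i) * (\<Sum>i\<in>I. D i * h i ^ 2)"
proof (cases "(\<Sum>i\<in>I. D i) = 0")
  case True
  then have "\<forall>i\<in>I. D i = 0" using assms sum_nonneg_eq_0_iff by blast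
  then show ?thesis by simp
next
  case False
  define V where "V = (\<Sum>i\<in>I. D i)"
  define S where "S = (\<Sum>i\<in>I. D i * h i)"
  have "V \<ge> 0" unfolding V_def using assms by (simp add: sum_nonneg)
  have "(\<Sum>i\<in>I. D i * (h i - S / V)^2) \<ge> 0"
    using assms by (intro sum_nonneg) auto
  then have "V * (\<Sum>i\<in>I. D i * (h i - S / V)^2) \<ge> 0" using \<open>V \<ge> 0\<close> by simp
  moreover have "S - S / V * V = 0"
    using False V_def by simp
  ultimately show ?thesis using var_ident[of D I h "S / V"]
    unfolding V_def[symmetric] S_def[symmetric] by simp
qed

locale setting =
  fixes x :: "nat \<Rightarrow> real ^ 'd"
    and C :: "nat \<Rightarrow> (real ^ 'd) set"
    and \<delta>l :: "nat \<Rightarrow> real"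
    and n k :: nat and \<alpha> \<sigma> \<delta> z :: real
    and U :: "nat \<Rightarrow> nat \<Rightarrow> real" and lam :: "nat \<Rightarrow> real"
  assumes alpha_pos: "\<alpha> > 0"
    and distinct_pts: "inj_on x {..<n}"
    and k_pos: "k \<ge> 1"
    and part_sub: "\<forall>l<k. C l \<subseteq> x ` {..<n}"
    and part_disj: "\<forall>l<k. \<forall>m<k. l \<noteq> m \<longrightarrow> C l \<inter> C m = {}"
    and part_cover: "(\<Union>l<k. C l) = x ` {..<n}"
    and card_ge2: "\<forall>l<k. card (C l) \<ge> 2"
    and conn: "\<forall>l<k. connected_at_distance (C l) (\<delta>l l)"
    and delta_def: "\<delta> = Min ((\<lambda>m. setdist (C m) (x ` {..<n} - C m) powr \<alpha>) ` {..<k})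
                        - 3 * Max ((\<lambda>l. \<delta>l l powr \<alpha>) ` {..<k})"
    and delta_pos: "\<delta> > 0"
    and eig: "ordered_eigenbasis n (norm_laplacian \<alpha> \<sigma> x n) U lam"
    and z_ge: "z \<ge> 10"
    and sigma_pos: "\<sigma> > 0"
    and sigma_bound: "\<sigma> < \<delta> powr (1 / \<alpha>) * ln (13 ^ 8 * real k ^ 9 * real n powr z) powr (- 1 / \<alpha>)"
begin

definition "A i j = affinity \<alpha> \<sigma> x i j"
definition "D i = degree \<alpha> \<sigma> x n i"
definition "f c i = U i c / sqrt (D i)"
definition "I l = {i. i < n \<and> x i \<in> C l}"
definition "s = \<sigma> powr \<alpha>"
definition "W = Max ((\<lambda>l. \<delta>l l powr \<alpha>) ` {..<k})"
definition "dm = Min ((\<lambda>m. setdist (C m) (x ` {..<n} - C m) powr \<alpha>) ` {..<k})"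
definition "w = exp (- W / s)"
definition "eps = exp (- dm / s)"
definition "eta = exp (- \<delta> / s)"

lemma s_pos: "s > 0" unfolding s_def using sigma_pos by simp

lemma A_sym: "A i j = A j i"
  unfolding A_def affinity_def by (simp add: dist_commute)

lemma A_diag: "A i i = 0"
  unfolding A_def affinity_def by simp

lemma A_formula: "i \<noteq> j \<Longrightarrow> A i j = exp (- (dist (x i) (x j) powr \<alpha>) / s)"
  unfolding A_def affinity_def K_sigma_def s_def
  using sigma_pos by (simp add: powr_divide)

lemma A_nonneg: "0 \<le> A i j"
  unfolding A_def affinity_def K_sigma_def by simp

lemma A_le1: "A i j \<le> 1"
  unfolding A_def affinity_def K_sigma_def by simp

lemma D_sum: "D i = (\<Sum>j<n. A i j)"
  unfolding D_def degree_def A_def by simp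

lemma D_le: "D i \<le> n"
proof -
  have "D i \<le> (\<Sum>j<n. 1)" unfolding D_sum by (intro sum_mono) (simp add: A_le1)
  then show ?thesis by simp
qed

lemma D_nonneg: "0 \<le> D i"
  unfolding D_sum by (intro sum_nonneg) (simp add: A_nonneg)

lemma I_sub: "I l \<subseteq> {..<n}" unfolding I_def by auto

lemma I_finite: "finite (I l)" using I_sub finite_subset by blast

lemma C_eq: "l < k \<Longrightarrow> C l = x ` I l"
  using part_sub unfolding I_def by auto

lemma card_I: "l < k \<Longrightarrow> card (I l) \<ge> 2"
proof -
  assume l: "l < k"
  have "inj_on x (I l)" using distinct_pts I_sub inj_on_subset by blast
  then have "card (C l) = card (I l)" using C_eq[OF l] card_image by metis
  moreover have "2 \<le> card (C l)" using card_ge2 l by blast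
  ultimately show ?thesis by linarith
qed

lemma cluster_ex: "i < n \<Longrightarrow> \<exists>l<k. i \<in> I l"
proof -
  assume i: "i < n"
  then have "x i \<in> (\<Union>l<k. C l)" using part_cover by auto
  then show ?thesis unfolding I_def using i by auto
qed

lemma I_disj: "l < k \<Longrightarrow> m < k \<Longrightarrow> l \<noteq> m \<Longrightarrow> I l \<inter> I m = {}"
  using part_disj unfolding I_def by blast

lemma cluster_unique: "l < k \<Longrightarrow> m < k \<Longrightarrow> i \<in> I l \<Longrightarrow> i \<in> I m \<Longrightarrow> l = m"
  using I_disj by blast

lemma I_Union: "(\<Union>l<k. I l) = {..<n}"
  using cluster_ex I_sub by blast

lemma sum_partition: "(\<Sum>i<n. g i) = (\<Sum>l<k. \<Sum>i\<in>I l. g i)"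
proof -
  have "(\<Sum>i<n. g i) = sum g (\<Union>l<k. I l)" using I_Union by simp
  also have "\<dots> = (\<Sum>l<k. sum g (I l))"
    by (rule sum.UNION_disjoint) (auto simp: I_finite I_disj)
  finally show ?thesis .
qed

lemma n_ge: "2 * k \<le> n"
proof -
  have "(\<Sum>l<k. 2) \<le> (\<Sum>l<k. card (I l))" by (intro sum_mono) (simp add: card_I)
  also have "\<dots> = (\<Sum>l<k. \<Sum>i\<in>I l. 1)" by simp
  also have "\<dots> = (\<Sum>i<n. (1::nat))" using sum_partition[of "\<lambda>_. 1::nat"] by simp
  finally show ?thesis by simp
qed

lemma k_less: "k < n" using n_ge k_pos by simp

lemma n_ge2: "n \<ge> 2" using n_ge k_pos by simp


lemma cross: "m < k \<Longrightarrow> i \<in> I m \<Longrightarrow> j < n \<Longrightarrow> j \<notin> I m \<Longrightarrow> A i j \<le> eps"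
proof -
  assume m: "m < k" and i: "i \<in> I m" and j: "j < n" "j \<notin> I m"
  have ij: "i \<noteq> j" using i j by auto
  have xi: "x i \<in> C m" using i unfolding I_def by auto
  have xj: "x j \<in> x ` {..<n} - C m" using j unfolding I_def by auto
  have "setdist (C m) (x ` {..<n} - C m) \<le> dist (x i) (x j)" by (rule setdist_le_dist[OF xi xj])
  then have "setdist (C m) (x ` {..<n} - C m) powr \<alpha> \<le> dist (x i) (x j) powr \<alpha>"
    using alpha_pos by (intro powr_mono2) (auto simp: setdist_pos_le)
  moreover have "dm \<le> setdist (C m) (x ` {..<n} - C m) powr \<alpha>"
    unfolding dm_def using m by (intro Min_le) auto
  ultimately have "dm \<le> dist (x i) (x j) powr \<alpha>" by linarith
  then have "- (dist (x i) (x j) powr \<alpha>) / s \<le> - dm / s"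
    using s_pos by (simp add: divide_right_mono)
  then show ?thesis unfolding eps_def A_formula[OF ij] by simp
qed

lemma inner: "l < k \<Longrightarrow> i \<noteq> j \<Longrightarrow> dist (x i) (x j) \<le> \<delta>l l \<Longrightarrow> w \<le> A i j"
proof -
  assume l: "l < k" and ij: "i \<noteq> j" and d: "dist (x i) (x j) \<le> \<delta>l l"
  have "dist (x i) (x j) powr \<alpha> \<le> \<delta>l l powr \<alpha>"
    using alpha_pos d by (intro powr_mono2) auto
  moreover have "\<delta>l l powr \<alpha> \<le> W" unfolding W_def using l by (intro Max_ge) auto
  ultimately have "dist (x i) (x j) powr \<alpha> \<le> W" by linarith
  then have "- W / s \<le> - (dist (x i) (x j) powr \<alpha>) / s"
    using s_pos by (simp add: divide_right_mono)
  then show ?thesis unfolding w_def A_formula[OF ij] by simp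
qed

lemma W_nonneg: "0 \<le> W"
proof -
  have "\<delta>l 0 powr \<alpha> \<le> W" unfolding W_def using k_pos by (intro Max_ge) auto
  then show ?thesis by (meson order_trans powr_ge_zero)
qed

lemma w_pos: "0 < w" unfolding w_def by simp

lemma w_le1: "w \<le> 1" unfolding w_def using W_nonneg s_pos by simp

lemma eps_eq: "eps = eta * w ^ 3"
proof -
  have dm: "dm = \<delta> + 3 * W" using delta_def unfolding dm_def W_def by simp
  have "- dm / s = - \<delta> / s + of_nat 3 * (- W / s)" unfolding dm using s_pos by (simp add: field_simps)
  then show ?thesis unfolding eps_def eta_def w_def
    by (simp only: exp_add exp_of_nat_mult)
qed

lemma eta_pos: "0 < eta" unfolding eta_def by simp

lemma eta_bound: "eta * (13 ^ 8 * real k ^ 9 * real n powr z) < 1"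
proof -
  define B where "B = 13 ^ 8 * real k ^ 9 * real n powr z"
  have n1: "real n \<ge> 1" using n_ge2 by simp
  have "real n powr z \<ge> 1" using n1 z_ge by (simp add: ge_one_powr_ge_zero)
  moreover have "real k ^ 9 \<ge> 1" using k_pos by simp
  ultimately have "1 * 1 \<le> real k ^ 9 * real n powr z" by (intro mult_mono) auto
  then have B1: "B > 1" unfolding B_def by simp
  then have lnB: "ln B > 0" by simp
  have "\<sigma> < \<delta> powr (1 / \<alpha>) * ln B powr (- 1 / \<alpha>)" using sigma_bound unfolding B_def by simp
  then have "\<sigma> powr \<alpha> < (\<delta> powr (1 / \<alpha>) * ln B powr (- 1 / \<alpha>)) powr \<alpha>"
    using alpha_pos sigma_pos by (intro powr_less_mono2) auto
  also have "\<dots> = (\<delta> powr (1 / \<alpha>)) powr \<alpha> * (ln B powr (- 1 / \<alpha>)) powr \<alpha>"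
    by (rule powr_mult)
  also have "\<dots> = \<delta> powr (1 / \<alpha> * \<alpha>) * ln B powr (- 1 / \<alpha> * \<alpha>)"
    by (simp add: powr_powr)
  also have "\<dots> = \<delta> / ln B"
    using alpha_pos delta_pos lnB by (simp add: powr_minus_divide)
  finally have "s < \<delta> / ln B" unfolding s_def .
  then have "ln B < \<delta> / s" using s_pos lnB by (simp add: field_simps)
  then have "exp (ln B) < exp (\<delta> / s)" by simp
  then have "B < exp (\<delta> / s)" using B1 by simp
  then have "eta * B < exp (- \<delta> / s) * exp (\<delta> / s)"
    unfolding eta_def by simp
  also have "\<dots> = exp (- \<delta> / s + \<delta> / s)" by (rule exp_add[symmetric])
  also have "\<dots> = 1" by simp
  finally show ?thesis unfolding B_def .
qed

definition "R l a b \<longleftrightarrow> a \<in> I l \<and> b \<in> I l \<and> a \<noteq> b \<and> dist (x a) (x b) \<le> \<delta>l l"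

lemma conn_path:
  assumes l: "l < k" and i: "i \<in> I l" and j: "j \<in> I l"
  shows "(R l)\<^sup>*\<^sup>* i j"
proof -
  define Rs where "Rs = {b \<in> I l. (R l)\<^sup>*\<^sup>* i b}"
  define S1 where "S1 = x ` Rs"
  define S2 where "S2 = C l - S1"
  have Rs_sub: "Rs \<subseteq> I l" unfolding Rs_def by auto
  have S1_sub: "S1 \<subseteq> C l" unfolding S1_def using Rs_sub C_eq[OF l] by auto
  have "S2 = {}"
  proof (rule ccontr)
    assume ne: "S2 \<noteq> {}"
    have S1ne: "S1 \<noteq> {}" unfolding S1_def Rs_def using i by auto
    have ca: "connected_at_distance (C l) (\<delta>l l)" using conn l by blast
    have un: "S1 \<union> S2 = C l" unfolding S2_def using S1_sub by auto
    have dj: "S1 \<inter> S2 = {}" unfolding S2_def by auto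
    have "\<not> setdist S1 S2 > \<delta>l l"
    proof
      assume "setdist S1 S2 > \<delta>l l"
      then have "\<exists>T1 T2. T1 \<noteq> {} \<and> T2 \<noteq> {} \<and> T1 \<union> T2 = C l \<and> T1 \<inter> T2 = {} \<and> setdist T1 T2 > \<delta>l l"
        using S1ne ne un dj by blast
      then show False using ca unfolding connected_at_distance_def by blast
    qed
    moreover have fin1: "finite S1" unfolding S1_def using Rs_sub I_finite finite_subset by blast
    moreover have fin2: "finite S2" unfolding S2_def using C_eq[OF l] I_finite by simp
    ultimately obtain p q where p: "p \<in> S1" and q: "q \<in> S2" and pq: "dist p q = setdist S1 S2"
      using setdist_compact_closed[OF finite_imp_compact[OF fin1] finite_imp_closed[OF fin2] S1ne ne] by blast
    obtain a where a: "a \<in> Rs" "p = x a" using p unfolding S1_def by auto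
    obtain b where b: "b \<in> I l" "q = x b" using q C_eq[OF l] unfolding S2_def by auto
    have bn: "b \<notin> Rs" using q b unfolding S2_def S1_def by auto
    have "a \<noteq> b" using a bn by auto
    moreover have "dist (x a) (x b) \<le> \<delta>l l" using pq a b \<open>\<not> setdist S1 S2 > \<delta>l l\<close> by simp
    ultimately have "R l a b" unfolding R_def using a Rs_sub b by auto
    moreover have "(R l)\<^sup>*\<^sup>* i a" using a unfolding Rs_def by auto
    ultimately have "(R l)\<^sup>*\<^sup>* i b" by (rule rtranclp.rtrancl_into_rtrancl[rotated])
    then show False using bn b unfolding Rs_def by auto
  qed
  then have "x j \<in> S1" using j C_eq[OF l] unfolding S2_def by auto
  then obtain b where b: "b \<in> Rs" "x j = x b" unfolding S1_def by auto
  have "j = b" using b Rs_sub j I_sub distinct_pts unfolding inj_on_def by blast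
  then show ?thesis using b unfolding Rs_def by auto
qed

lemma R_step: "R l a b \<Longrightarrow> l < k \<Longrightarrow> a < n \<and> b < n \<and> w \<le> A a b"
  unfolding R_def using inner I_sub by blast

lemma D_ge_w: "i < n \<Longrightarrow> w \<le> D i"
proof -
  assume i: "i < n"
  obtain l where l: "l < k" "i \<in> I l" using cluster_ex[OF i] by auto
  have "card (I l) \<ge> 2" using card_I l by simp
  have "\<not> I l \<subseteq> {i}"
  proof
    assume "I l \<subseteq> {i}"
    then have "card (I l) \<le> card {i}" by (intro card_mono) auto
    then show False using \<open>card (I l) \<ge> 2\<close> by simp
  qed
  then obtain j where j: "j \<in> I l" "j \<noteq> i" by blast
  have "(R l)\<^sup>*\<^sup>* i j" using conn_path l j by simp
  then obtain y where "R l i y" using j(2) by (auto elim: converse_rtranclpE)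
  then have y: "y < n" "w \<le> A i y" using R_step l by auto
  have "A i y \<le> D i" unfolding D_sum using y by (intro member_le_sum) (auto simp: A_nonneg)
  then show ?thesis using y by linarith
qed

lemma D_pos: "i < n \<Longrightarrow> 0 < D i" using D_ge_w w_pos by (meson less_le_trans)

end

lemma rtrancl_path_set:
  assumes "rtrancl_path r a xs b" "\<And>p q. r p q \<Longrightarrow> q \<in> S"
  shows "set xs \<subseteq> S"
  using assms by (induction rule: rtrancl_path.induct) auto

context setting begin

definition "Lm i j = (if i = j then 1 else 0) - A i j / (sqrt (D i) * sqrt (D j))"
definition "ip \<phi> c = (\<Sum>i<n. D i * \<phi> i * f c i)"
definition "En \<phi> = (\<Sum>i<n. \<Sum>j<n. A i j * (\<phi> i - \<phi> j)^2) / 2"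

lemma ortho: "\<forall>c<n. \<forall>c'<n. (\<Sum>i<n. U i c * U i c') = (if c = c' then 1 else 0)"
  using eig unfolding ordered_eigenbasis_def by blast

lemma eigen: "\<forall>c<n. \<forall>i<n. (\<Sum>j<n. Lm i j * U j c) = lam c * U i c"
proof -
  have "norm_laplacian \<alpha> \<sigma> x n = Lm"
    unfolding norm_laplacian_def Lm_def A_def D_def by (intro ext) simp
  then show ?thesis using eig unfolding ordered_eigenbasis_def by simp
qed

lemma lam_mono: "c \<le> c' \<Longrightarrow> c' < n \<Longrightarrow> lam c \<le> lam c'"
  using eig unfolding ordered_eigenbasis_def by auto

lemma sqrtD_f: "i < n \<Longrightarrow> sqrt (D i) * f c i = U i c"
  unfolding f_def using D_pos[of i] by simp

lemma D_f: "i < n \<Longrightarrow> D i * f c i = sqrt (D i) * U i c"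
  unfolding f_def using D_pos[of i]
  by (simp add: field_simps)

lemma quad_L: "(\<Sum>i<n. \<Sum>j<n. (sqrt (D i) * \<phi> i) * Lm i j * (sqrt (D j) * \<phi> j)) = En \<phi>"
  unfolding Lm_def En_def
  by (rule quadform) (auto simp: A_sym D_sum D_pos[unfolded D_sum])

lemma En_nonneg: "0 \<le> En \<phi>"
  unfolding En_def by (intro divide_nonneg_pos sum_nonneg) (auto simp: A_nonneg)

lemma ip_eq: "ip \<phi> c = (\<Sum>i<n. (sqrt (D i) * \<phi> i) * U i c)"
  unfolding ip_def
proof (rule sum.cong[OF refl])
  fix i assume "i \<in> {..<n}"
  then have "i < n" by simp
  then show "D i * \<phi> i * f c i = sqrt (D i) * \<phi> i * U i c"
    using D_f[of i c] by (simp add: algebra_simps)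
qed

lemma P_eq: "(\<Sum>c<n. (ip \<phi> c)^2) = (\<Sum>i<n. D i * \<phi> i ^ 2)"
proof -
  have "(\<Sum>c<n. (ip \<phi> c)^2) = (\<Sum>i<n. (sqrt (D i) * \<phi> i)^2)"
    unfolding ip_eq by (rule spec_expand(1)[OF ortho eigen])
  also have "\<dots> = (\<Sum>i<n. D i * \<phi> i ^ 2)"
    by (intro sum.cong refl) (simp add: power_mult_distrib D_nonneg)
  finally show ?thesis .
qed

lemma Q_eq: "(\<Sum>c<n. lam c * (ip \<phi> c)^2) = En \<phi>"
proof -
  have "(\<Sum>c<n. lam c * (ip \<phi> c)^2) = (\<Sum>i<n. \<Sum>j<n. (sqrt (D i) * \<phi> i) * Lm i j * (sqrt (D j) * \<phi> j))"
    unfolding ip_eq by (rule spec_expand(2)[OF ortho eigen])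
  then show ?thesis using quad_L by simp
qed

lemma energy: "c < n \<Longrightarrow> En (f c) = lam c"
proof -
  assume c: "c < n"
  have "En (f c) = (\<Sum>i<n. \<Sum>j<n. U i c * Lm i j * U j c)"
    unfolding quad_L[symmetric] by (intro sum.cong refl) (simp add: sqrtD_f)
  also have "\<dots> = (\<Sum>i<n. U i c * (\<Sum>j<n. Lm i j * U j c))"
    by (simp add: sum_distrib_left mult.assoc)
  also have "\<dots> = (\<Sum>i<n. lam c * (U i c * U i c))"
    using eigen c by (intro sum.cong refl) auto
  also have "\<dots> = lam c * (\<Sum>i<n. U i c * U i c)" by (simp add: sum_distrib_left)
  also have "\<dots> = lam c" using ortho c by simp
  finally show ?thesis .
qed

lemma lam_nonneg: "c < n \<Longrightarrow> 0 \<le> lam c"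
  using energy En_nonneg by metis

lemma fnorm: "c < n \<Longrightarrow> (\<Sum>i<n. D i * f c i ^ 2) = 1"
proof -
  assume c: "c < n"
  have "(\<Sum>i<n. D i * f c i ^ 2) = (\<Sum>i<n. U i c * U i c)"
    by (intro sum.cong refl) (metis D_nonneg lessThan_iff power2_eq_square power_mult_distrib real_sqrt_pow2 sqrtD_f)
  also have "\<dots> = 1" using ortho c by simp
  finally show ?thesis .
qed

lemma pathb:
  assumes l: "l < k" and i: "i \<in> I l" and j: "j \<in> I l" and c: "c < n"
  shows "w * (f c i - f c j)^2 \<le> 2 * n * lam c"
proof -
  obtain xs where "rtrancl_path (R l) i xs j"
    using conn_path[OF l i j] rtranclp_eq_rtrancl_path by metis
  then obtain ys where p: "rtrancl_path (R l) i ys j" and d: "distinct (i # ys)"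
    using rtrancl_path_distinct by metis
  have sub: "set (i # ys) \<subseteq> {..<n}"
  proof -
    have "set ys \<subseteq> {..<n}" using rtrancl_path_set[OF p, of "{..<n}"] R_step[OF _ l] by blast
    moreover have "i < n" using i I_sub by blast
    ultimately show ?thesis by simp
  qed
  have len: "length ys \<le> n"
  proof -
    have "length (i # ys) = card (set (i # ys))" using d distinct_card by metis
    also have "\<dots> \<le> card {..<n}" using sub by (intro card_mono) auto
    finally show ?thesis by simp
  qed
  have "w * (f c i - f c j)^2 \<le> real (length ys) * (\<Sum>a\<in>set (i # ys). \<Sum>b<n. A a b * (f c a - f c b)^2)"
    by (rule path_bound[OF p d]) (auto simp: R_step[OF _ l] A_nonneg w_pos)
  also have "\<dots> \<le> real n * (\<Sum>a<n. \<Sum>b<n. A a b * (f c a - f c b)^2)"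
  proof (rule mult_mono)
    show "(\<Sum>a\<in>set (i # ys). \<Sum>b<n. A a b * (f c a - f c b)^2) \<le> (\<Sum>a<n. \<Sum>b<n. A a b * (f c a - f c b)^2)"
      using sub by (intro sum_mono2) (auto intro!: sum_nonneg simp: A_nonneg)
    show "0 \<le> (\<Sum>a\<in>set (i # ys). \<Sum>b<n. A a b * (f c a - f c b)^2)"
      by (auto intro!: sum_nonneg simp: A_nonneg)
  qed (use len in auto)
  also have "\<dots> = real n * (2 * En (f c))" unfolding En_def by simp
  also have "\<dots> = 2 * n * lam c" using energy[OF c] by simp
  finally show ?thesis .
qed

end

context setting begin

definition "chi l i = (if i \<in> I l then 1 else (0::real))"
definition "vol l = (\<Sum>i\<in>I l. D i)"
definition "T l c = (ip (chi l) c)^2 / vol l"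

lemma ip_chi: "ip (chi l) c = (\<Sum>i\<in>I l. D i * f c i)"
proof -
  have "ip (chi l) c = (\<Sum>i<n. if i \<in> I l then D i * f c i else 0)"
    unfolding ip_def chi_def by (intro sum.cong refl) auto
  also have "\<dots> = (\<Sum>i\<in>{..<n} \<inter> I l. D i * f c i)"
    by (simp add: sum.inter_restrict)
  also have "{..<n} \<inter> I l = I l" using I_sub by auto
  finally show ?thesis .
qed

lemma sum_chi: "(\<Sum>i<n. chi l i * g i) = (\<Sum>i\<in>I l. g i)"
proof -
  have "(\<Sum>i<n. chi l i * g i) = (\<Sum>i<n. if i \<in> I l then g i else 0)"
    unfolding chi_def by (intro sum.cong refl) auto
  also have "\<dots> = (\<Sum>i\<in>{..<n} \<inter> I l. g i)"
    by (simp add: sum.inter_restrict)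
  also have "{..<n} \<inter> I l = I l" using I_sub by auto
  finally show ?thesis .
qed

lemma vol_ge: "l < k \<Longrightarrow> real (card (I l)) * w \<le> vol l"
proof -
  assume l: "l < k"
  have "(\<Sum>i\<in>I l. w) \<le> vol l" unfolding vol_def
    using I_sub by (intro sum_mono) (auto intro: D_ge_w)
  then show ?thesis by simp
qed

lemma vol_pos: "l < k \<Longrightarrow> 2 * w \<le> vol l"
proof -
  assume l: "l < k"
  have "2 * w \<le> real (card (I l)) * w"
    using card_I[OF l] w_pos by (intro mult_right_mono) auto
  then show ?thesis using vol_ge[OF l] by linarith
qed

lemma vol_pos': "l < k \<Longrightarrow> 0 < vol l" using vol_pos w_pos by (meson less_le_trans mult_pos_pos zero_less_numeral)

lemma sumD_le: "(\<Sum>i<n. D i) \<le> real n * n"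
proof -
  have "(\<Sum>i<n. D i) \<le> (\<Sum>i<n. real n)" by (intro sum_mono) (simp add: D_le)
  then show ?thesis by simp
qed

lemma sum_vol: "(\<Sum>l<k. vol l) = (\<Sum>i<n. D i)"
  unfolding vol_def using sum_partition[of D] by simp

lemma T_nonneg: "l < k \<Longrightarrow> 0 \<le> T l c"
  unfolding T_def using vol_pos'[of l] by simp

lemma T_sum: "l < k \<Longrightarrow> (\<Sum>c<n. T l c) = 1"
proof -
  assume l: "l < k"
  have "(\<Sum>c<n. (ip (chi l) c)^2) = (\<Sum>i<n. D i * chi l i ^ 2)" by (rule P_eq)
  also have "\<dots> = (\<Sum>i<n. chi l i * D i)"
    by (intro sum.cong refl) (simp add: chi_def)
  also have "\<dots> = vol l" unfolding vol_def by (rule sum_chi)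
  finally show ?thesis unfolding T_def using vol_pos'[OF l] by (simp add: sum_divide_distrib[symmetric])
qed

lemma En_chi: "l < k \<Longrightarrow> En (chi l) \<le> real n * card (I l) * eps"
proof -
  assume l: "l < k"
  have t: "A i j * (chi l i - chi l j)^2 \<le> eps * (chi l i + chi l j)" if "i < n" "j < n" for i j
  proof (cases "i \<in> I l"; cases "j \<in> I l")
    assume "i \<in> I l" "j \<notin> I l"
    then show ?thesis using cross[OF l, of i j] that by (simp add: chi_def)
  next
    assume "i \<notin> I l" "j \<in> I l"
    then show ?thesis using cross[OF l, of j i] that by (simp add: chi_def A_sym)
  next
    assume "i \<in> I l" "j \<in> I l"
    then show ?thesis using eta_pos w_pos by (simp add: chi_def eps_eq)
  next
    assume "i \<notin> I l" "j \<notin> I l"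
    then show ?thesis by (simp add: chi_def)
  qed
  have sc: "(\<Sum>i<n. chi l i) = real (card (I l))" using sum_chi[of l "\<lambda>_. 1"] by simp
  have "(\<Sum>i<n. \<Sum>j<n. A i j * (chi l i - chi l j)^2) \<le> (\<Sum>i<n. \<Sum>j<n. eps * (chi l i + chi l j))"
    using t by (intro sum_mono) auto
  also have "\<dots> = (\<Sum>i<n. real n * eps * chi l i + eps * (\<Sum>j<n. chi l j))"
    by (intro sum.cong refl) (simp add: sum.distrib sum_distrib_left algebra_simps)
  also have "\<dots> = eps * (real n * (\<Sum>i<n. chi l i) + real n * (\<Sum>j<n. chi l j))"
    by (simp add: sum.distrib sum_distrib_left algebra_simps)
  also have "\<dots> = 2 * (real n * card (I l) * eps)" using sc by (simp add: algebra_simps)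
  finally show ?thesis unfolding En_def by simp
qed

lemma TQ: "l < k \<Longrightarrow> (\<Sum>c<n. lam c * T l c) \<le> real n * eps / w"
proof -
  assume l: "l < k"
  have "(\<Sum>c<n. lam c * T l c) = En (chi l) / vol l"
    unfolding T_def using Q_eq[of "chi l"] by (simp add: sum_divide_distrib[symmetric])
  also have "\<dots> \<le> (real n * card (I l) * eps) / (real (card (I l)) * w)"
  proof (rule frac_le)
    show "0 \<le> real n * card (I l) * eps" using eps_eq eta_pos w_pos by simp
    show "En (chi l) \<le> real n * card (I l) * eps" by (rule En_chi[OF l])
    show "0 < real (card (I l)) * w" using card_I[OF l] w_pos by simp
    show "real (card (I l)) * w \<le> vol l" by (rule vol_ge[OF l])
  qed
  also have "\<dots> = real n * eps / w" using card_I[OF l] by simp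
  finally show ?thesis .
qed

lemma bessel: "c < n \<Longrightarrow> (\<Sum>l<k. T l c) \<le> 1"
proof -
  assume c: "c < n"
  have "T l c \<le> (\<Sum>i\<in>I l. D i * f c i ^ 2)" if l: "l < k" for l
  proof -
    have "(ip (chi l) c)^2 \<le> vol l * (\<Sum>i\<in>I l. D i * f c i ^ 2)"
      unfolding ip_chi vol_def by (rule wcs) (auto simp: I_finite D_nonneg)
    then show ?thesis unfolding T_def using vol_pos'[OF l] by (simp add: divide_le_eq mult.commute)
  qed
  then have "(\<Sum>l<k. T l c) \<le> (\<Sum>l<k. \<Sum>i\<in>I l. D i * f c i ^ 2)" by (intro sum_mono) auto
  also have "\<dots> = 1" using sum_partition[of "\<lambda>i. D i * f c i ^ 2"] fnorm[OF c] by simp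
  finally show ?thesis .
qed

lemma variance: "c < n \<Longrightarrow> 1 - (\<Sum>l<k. T l c) \<le> 2 * real n ^ 3 * lam c / w"
proof -
  assume c: "c < n"
  have per: "(\<Sum>i\<in>I l. D i * f c i ^ 2) - T l c \<le> vol l * (2 * n * lam c / w)" if l: "l < k" for l
  proof -
    obtain i0 where i0: "i0 \<in> I l" using card_I[OF l] by (metis card.empty ex_in_conv not_numeral_le_zero)
    have "vol l * (\<Sum>i\<in>I l. D i * f c i ^ 2) - (ip (chi l) c)^2 \<le> vol l * (\<Sum>i\<in>I l. D i * (f c i - f c i0)^2)"
      unfolding ip_chi vol_def by (rule var_le)
    also have "\<dots> \<le> vol l * (\<Sum>i\<in>I l. D i * (2 * n * lam c / w))"
    proof (rule mult_left_mono[OF sum_mono])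
      fix i assume i: "i \<in> I l"
      have "w * (f c i - f c i0)^2 \<le> 2 * n * lam c" by (rule pathb[OF l i i0 c])
      then have "(f c i - f c i0)^2 \<le> 2 * n * lam c / w" using w_pos by (simp add: field_simps)
      then show "D i * (f c i - f c i0)^2 \<le> D i * (2 * n * lam c / w)"
        by (intro mult_left_mono) (auto simp: D_nonneg)
    qed (use vol_pos'[OF l] in auto)
    also have "\<dots> = vol l * (vol l * (2 * n * lam c / w))" unfolding vol_def
      by (simp only: sum_distrib_right)
    finally have "vol l * (\<Sum>i\<in>I l. D i * f c i ^ 2) - (ip (chi l) c)^2 \<le> vol l * (vol l * (2 * n * lam c / w))" .
    then show ?thesis unfolding T_def using vol_pos'[OF l]
      by (simp add: field_simps)
  qed
  have "1 - (\<Sum>l<k. T l c) = (\<Sum>l<k. (\<Sum>i\<in>I l. D i * f c i ^ 2) - T l c)"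
    using sum_partition[of "\<lambda>i. D i * f c i ^ 2"] fnorm[OF c] by (simp add: sum_subtractf)
  also have "\<dots> \<le> (\<Sum>l<k. vol l * (2 * n * lam c / w))" using per by (intro sum_mono) auto
  also have "\<dots> = (\<Sum>i<n. D i) * (2 * n * lam c / w)" unfolding sum_vol[symmetric]
    by (simp only: sum_distrib_right)
  also have "\<dots> \<le> (real n * n) * (2 * n * lam c / w)"
    using sumD_le lam_nonneg[OF c] w_pos by (intro mult_right_mono) auto
  also have "\<dots> = 2 * real n ^ 3 * lam c / w" by (simp add: power3_eq_cube)
  finally show ?thesis .
qed


lemma lam_upper: "lam (k - 1) \<le> real k * n * eps / w"
proof -
  define F where "F = {k - 1..<n}"
  have kn: "k < n" by (rule k_less)
  have h1: "(\<Sum>l<k. \<Sum>c<k - 1. T l c) \<le> real (k - 1)"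
  proof -
    have "(\<Sum>l<k. \<Sum>c<k - 1. T l c) = (\<Sum>c<k - 1. \<Sum>l<k. T l c)" by (rule sum.swap)
    also have "\<dots> \<le> (\<Sum>c<k - 1. 1)" using kn by (intro sum_mono bessel) auto
    finally show ?thesis by simp
  qed
  have split: "(\<Sum>c<n. g c) = (\<Sum>c<k - 1. g c) + (\<Sum>c\<in>F. g c)" for g :: "nat \<Rightarrow> real"
    unfolding F_def lessThan_atLeast0 using kn by (simp add: sum.atLeastLessThan_concat)
  have h2: "(\<Sum>l<k. \<Sum>c<n. T l c) = real k" using T_sum by simp
  have h3: "1 \<le> (\<Sum>l<k. \<Sum>c\<in>F. T l c)"
  proof -
    have "(\<Sum>l<k. \<Sum>c<n. T l c) = (\<Sum>l<k. \<Sum>c<k - 1. T l c) + (\<Sum>l<k. \<Sum>c\<in>F. T l c)"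
      unfolding split by (simp add: sum.distrib)
    then show ?thesis using h1 h2 k_pos by (simp add: of_nat_diff)
  qed
  have h4: "lam (k - 1) * (\<Sum>l<k. \<Sum>c\<in>F. T l c) \<le> real k * n * eps / w"
  proof -
    have "lam (k - 1) * (\<Sum>l<k. \<Sum>c\<in>F. T l c) = (\<Sum>l<k. \<Sum>c\<in>F. lam (k - 1) * T l c)"
      by (simp add: sum_distrib_left)
    also have "\<dots> \<le> (\<Sum>l<k. \<Sum>c\<in>F. lam c * T l c)"
      by (intro sum_mono mult_right_mono lam_mono) (auto simp: F_def T_nonneg)
    also have "\<dots> \<le> (\<Sum>l<k. \<Sum>c<n. lam c * T l c)"
      by (intro sum_mono sum_mono2) (auto simp: F_def T_nonneg lam_nonneg)
    also have "\<dots> \<le> (\<Sum>l<k. real n * eps / w)" by (intro sum_mono TQ) auto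
    finally show ?thesis by simp
  qed
  have "0 \<le> lam (k - 1)" using lam_nonneg kn by simp
  then have "lam (k - 1) \<le> lam (k - 1) * (\<Sum>l<k. \<Sum>c\<in>F. T l c)"
    using h3 by (metis mult.right_neutral mult_left_mono)
  then show ?thesis using h4 by linarith
qed

lemma lam_lower: "w \<le> 2 * (real k + 1) * real n ^ 3 * lam k"
proof -
  have kn: "k < n" by (rule k_less)
  have "(\<Sum>c\<le>k. \<Sum>l<k. T l c) = (\<Sum>l<k. \<Sum>c\<le>k. T l c)" by (rule sum.swap)
  also have "\<dots> \<le> (\<Sum>l<k. \<Sum>c<n. T l c)"
    using kn by (intro sum_mono sum_mono2) (auto simp: T_nonneg)
  also have "\<dots> = real k" using T_sum by simp
  finally have up: "(\<Sum>c\<le>k. \<Sum>l<k. T l c) \<le> real k" .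
  have "(\<Sum>c\<le>k. 1 - 2 * real n ^ 3 * lam k / w) \<le> (\<Sum>c\<le>k. \<Sum>l<k. T l c)"
  proof (rule sum_mono)
    fix c assume c: "c \<in> {..k}"
    then have cn: "c < n" using kn by auto
    have "2 * real n ^ 3 * lam c / w \<le> 2 * real n ^ 3 * lam k / w"
      using lam_mono[of c k] c kn w_pos by (intro divide_right_mono mult_left_mono) auto
    then show "1 - 2 * real n ^ 3 * lam k / w \<le> (\<Sum>l<k. T l c)"
      using variance[OF cn] by linarith
  qed
  then have "(real k + 1) * (1 - 2 * real n ^ 3 * lam k / w) \<le> real k" using up by (simp add: add.commute)
  then have "1 \<le> (real k + 1) * (2 * real n ^ 3 * lam k / w)" by (simp add: algebra_simps)
  then have "w \<le> (real k + 1) * (2 * real n ^ 3 * lam k)" using w_pos by (simp add: field_simps)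
  then show ?thesis by (simp add: algebra_simps)
qed

end

context setting begin

definition "N2 = 2 * real k * n * lam (k - 1) / w"
definition "avg m c = ip (chi m) c / vol m"

lemma lamk1_nonneg: "0 \<le> lam (k - 1)" using lam_nonneg k_less by simp

lemma f_diff_bound: "l < k \<Longrightarrow> i \<in> I l \<Longrightarrow> j \<in> I l \<Longrightarrow> c < k \<Longrightarrow> (f c i - f c j)^2 \<le> 2 * n * lam (k - 1) / w"
proof -
  assume l: "l < k" and i: "i \<in> I l" and j: "j \<in> I l" and c: "c < k"
  have cn: "c < n" using c k_less by simp
  have "w * (f c i - f c j)^2 \<le> 2 * n * lam c" by (rule pathb[OF l i j cn])
  also have "\<dots> \<le> 2 * n * lam (k - 1)" using lam_mono[of c "k - 1"] c k_less by simp
  finally show ?thesis using w_pos by (simp add: field_simps)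
qed

lemma within: "l < k \<Longrightarrow> i \<in> I l \<Longrightarrow> j \<in> I l \<Longrightarrow> (\<Sum>c<k. (f c i - f c j)^2) \<le> N2"
proof -
  assume l: "l < k" and i: "i \<in> I l" and j: "j \<in> I l"
  have "(\<Sum>c<k. (f c i - f c j)^2) \<le> (\<Sum>c<k. 2 * n * lam (k - 1) / w)"
    by (intro sum_mono f_diff_bound[OF l i j]) auto
  then show ?thesis unfolding N2_def using w_pos by (simp add: field_simps)
qed

lemma to_avg: "m < k \<Longrightarrow> g \<in> I m \<Longrightarrow> (\<Sum>c<k. (f c g - avg m c)^2) \<le> N2"
proof -
  assume m: "m < k" and g: "g \<in> I m"
  have vp: "0 < vol m" by (rule vol_pos'[OF m])
  have per: "(f c g - avg m c)^2 \<le> 2 * n * lam (k - 1) / w" if c: "c < k" for c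
  proof -
    define h where "h i = f c g - f c i" for i
    have eq: "f c g - avg m c = (\<Sum>i\<in>I m. D i * h i) / vol m"
    proof -
      have "(\<Sum>i\<in>I m. D i * h i) = vol m * f c g - ip (chi m) c"
      proof -
        have a: "(\<Sum>i\<in>I m. D i * f c g) = vol m * f c g" unfolding vol_def by (simp add: sum_distrib_right)
        have "(\<Sum>i\<in>I m. D i * h i) = (\<Sum>i\<in>I m. D i * f c g - D i * f c i)"
          unfolding h_def by (simp add: algebra_simps)
        also have "\<dots> = (\<Sum>i\<in>I m. D i * f c g) - (\<Sum>i\<in>I m. D i * f c i)" by (rule sum_subtractf)
        finally show ?thesis unfolding a ip_chi .
      qed
      then show ?thesis unfolding avg_def using vp by (simp add: field_simps)
    qed
    have "(\<Sum>i\<in>I m. D i * h i)^2 \<le> vol m * (\<Sum>i\<in>I m. D i * h i ^ 2)"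
      unfolding vol_def by (rule wcs) (auto simp: I_finite D_nonneg)
    also have "\<dots> \<le> vol m * (\<Sum>i\<in>I m. D i * (2 * n * lam (k - 1) / w))"
    proof (rule mult_left_mono[OF sum_mono])
      fix i assume i: "i \<in> I m"
      show "D i * h i ^ 2 \<le> D i * (2 * n * lam (k - 1) / w)"
        unfolding h_def using f_diff_bound[OF m g i c] by (intro mult_left_mono) (auto simp: D_nonneg)
    qed (use vp in auto)
    also have "\<dots> = vol m * (vol m * (2 * n * lam (k - 1) / w))" unfolding vol_def
      by (simp only: sum_distrib_right)
    finally have "(\<Sum>i\<in>I m. D i * h i)^2 \<le> vol m * (vol m * (2 * n * lam (k - 1) / w))" .
    then have "((\<Sum>i\<in>I m. D i * h i) / vol m)^2 \<le> 2 * n * lam (k - 1) / w"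
      using vp by (simp add: power_divide field_simps power2_eq_square)
    then show ?thesis unfolding eq .
  qed
  have "(\<Sum>c<k. (f c g - avg m c)^2) \<le> (\<Sum>c<k. 2 * n * lam (k - 1) / w)"
    by (intro sum_mono per) auto
  then show ?thesis unfolding N2_def using w_pos by (simp add: field_simps)
qed

lemma N2_bound: "N2 \<le> 2 * real k ^ 2 * real n ^ 2 * eta"
proof -
  have "N2 \<le> 2 * real k * n * (real k * n * eps / w) / w"
    unfolding N2_def using lam_upper w_pos
    by (intro divide_right_mono mult_left_mono) auto
  also have "\<dots> = 2 * real k ^ 2 * real n ^ 2 * eta * w"
    unfolding eps_eq using w_pos by (simp add: power2_eq_square power3_eq_cube field_simps)
  also have "\<dots> \<le> 2 * real k ^ 2 * real n ^ 2 * eta"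
    using w_le1 eta_pos by (intro mult_left_le) auto
  finally show ?thesis .
qed

lemma npowr: "real n powr z \<ge> real n ^ 5"
proof -
  have n1: "real n \<ge> 1" using n_ge2 by simp
  have "real n ^ 5 = real n powr (5::real)" using n1 by (simp add: powr_realpow)
  also have "\<dots> \<le> real n powr z" using n1 z_ge by (intro powr_mono) auto
  finally show ?thesis .
qed

lemma eta_small1: "2 * (real k + 1) * real n ^ 5 * eta \<le> 1"
proof -
  have k1: "real k \<ge> 1" using k_pos by simp
  have "2 * (real k + 1) \<le> 13 ^ 8 * real k ^ 9"
  proof -
    have "real k ^ 1 \<le> real k ^ 9" using k1 by (intro power_increasing) auto
    then have kk: "real k \<le> real k ^ 9" by simp
    have "2 * (real k + 1) \<le> 4 * real k ^ 9"
    proof -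
      define K where "K = real k ^ 9"
      have "real k \<le> K" using kk K_def by simp
      then have "2 * (real k + 1) \<le> 4 * K" using k1 by smt
      then show ?thesis unfolding K_def .
    qed
    also have "\<dots> \<le> 13 ^ 8 * real k ^ 9" by (intro mult_right_mono) auto
    finally show ?thesis .
  qed
  then have "2 * (real k + 1) * real n ^ 5 \<le> 13 ^ 8 * real k ^ 9 * real n powr z"
    by (rule mult_mono[OF _ npowr]) auto
  then have "2 * (real k + 1) * real n ^ 5 * eta \<le> 13 ^ 8 * real k ^ 9 * real n powr z * eta"
    using eta_pos by (intro mult_right_mono) auto
  then show ?thesis using eta_bound by (simp add: mult.commute)
qed

lemma eta_small2: "72 * real k ^ 2 * eta * real n powr z \<le> 1"
proof -
  have k1: "real k \<ge> 1" using k_pos by simp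
  have "real k ^ 2 \<le> real k ^ 9" using k1 by (intro power_increasing) auto
  then have "72 * real k ^ 2 \<le> 72 * real k ^ 9" by simp
  also have "\<dots> \<le> 13 ^ 8 * real k ^ 9" by (intro mult_right_mono) auto
  finally have "72 * real k ^ 2 \<le> 13 ^ 8 * real k ^ 9" .
  then have "72 * real k ^ 2 * (eta * real n powr z) \<le> 13 ^ 8 * real k ^ 9 * (eta * real n powr z)"
    using eta_pos by (intro mult_right_mono) auto
  then show ?thesis using eta_bound by (simp add: algebra_simps)
qed


lemma vol_le: "m < k \<Longrightarrow> vol m \<le> real n ^ 2"
proof -
  assume m: "m < k"
  have "vol m \<le> (\<Sum>i<n. D i)" unfolding vol_def
    using I_sub by (intro sum_mono2) (auto simp: D_nonneg)
  then show ?thesis using sumD_le by (simp add: power2_eq_square)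
qed

lemma between:
  assumes m: "m < k" and m': "m' < k" and mm: "m \<noteq> m'"
  shows "1 / (2 * real n ^ 2) \<le> (\<Sum>c<k. (avg m c - avg m' c)^2)"
proof -
  define \<phi> where "\<phi> i = chi m i / vol m - chi m' i / vol m'" for i
  define Y where "Y = 1 / vol m + 1 / vol m'"
  have vp: "0 < vol m" "0 < vol m'" using vol_pos' m m' by auto
  have Ypos: "0 < Y" unfolding Y_def using vp by (intro add_pos_pos) auto
  have disj: "I m \<inter> I m' = {}" using I_disj m m' mm by simp
  have ipphi: "ip \<phi> c = avg m c - avg m' c" for c
  proof -
    have "ip \<phi> c = (\<Sum>i<n. D i * chi m i * f c i / vol m - D i * chi m' i * f c i / vol m')"
      unfolding ip_def \<phi>_def by (intro sum.cong refl) (simp add: algebra_simps)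
    also have "\<dots> = ip (chi m) c / vol m - ip (chi m') c / vol m'"
      unfolding ip_def by (simp add: sum_subtractf sum_divide_distrib)
    finally show ?thesis unfolding avg_def .
  qed
  have PY: "(\<Sum>c<n. (ip \<phi> c)^2) = Y"
  proof -
    have pt: "D i * \<phi> i ^ 2 = chi m i * (D i / (vol m)^2) + chi m' i * (D i / (vol m')^2)" for i
      using disj unfolding \<phi>_def chi_def by (auto simp: power_divide)
    have "(\<Sum>c<n. (ip \<phi> c)^2) = (\<Sum>i<n. D i * \<phi> i ^ 2)" by (rule P_eq)
    also have "\<dots> = (\<Sum>i<n. chi m i * (D i / (vol m)^2)) + (\<Sum>i<n. chi m' i * (D i / (vol m')^2))"
      unfolding pt by (rule sum.distrib)
    also have "\<dots> = vol m / (vol m)^2 + vol m' / (vol m')^2"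
      unfolding sum_chi vol_def by (simp add: sum_divide_distrib)
    also have "\<dots> = Y" unfolding Y_def using vp by (simp add: power2_eq_square)
    finally show ?thesis .
  qed
  have range: "- (1 / vol m') \<le> \<phi> i \<and> \<phi> i \<le> 1 / vol m" for i
  proof -
    have "0 < 1 / vol m" "0 < 1 / vol m'" using vp by auto
    moreover have "\<phi> i = 1 / vol m \<or> \<phi> i = - (1 / vol m') \<or> \<phi> i = 0"
      using disj unfolding \<phi>_def chi_def by auto
    ultimately show ?thesis by (elim disjE conjE) linarith+
  qed
  have trm: "A i j * (\<phi> i - \<phi> j)^2 \<le> eps * Y^2" if i: "i < n" and j: "j < n" for i j
  proof -
    obtain l0 where l0: "l0 < k" "i \<in> I l0" using cluster_ex[OF i] by auto
    have epsnn: "0 \<le> eps" unfolding eps_def by simp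
    show ?thesis
    proof (cases "j \<in> I l0")
      case True
      have same: "(i \<in> I q) = (j \<in> I q)" if q: "q < k" for q
      proof
        assume "i \<in> I q"
        then have "q = l0" using cluster_unique[OF q l0(1)] l0(2) by simp
        then show "j \<in> I q" using True by simp
      next
        assume "j \<in> I q"
        then have "q = l0" using cluster_unique[OF q l0(1)] True by simp
        then show "i \<in> I q" using l0(2) by simp
      qed
      have "chi m i = chi m j" unfolding chi_def using same[OF m] by simp
      moreover have "chi m' i = chi m' j" unfolding chi_def using same[OF m'] by simp
      ultimately have "\<phi> i = \<phi> j" unfolding \<phi>_def by simp
      then show ?thesis using epsnn by simp
    next
      case False
      have A: "A i j \<le> eps" by (rule cross[OF l0(1) l0(2) j False])
      have "\<bar>\<phi> i - \<phi> j\<bar> \<le> Y" using range[of i] range[of j] unfolding Y_def by auto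
      then have "(\<phi> i - \<phi> j)^2 \<le> Y^2"
      proof -
        have "\<bar>\<phi> i - \<phi> j\<bar> ^ 2 \<le> Y ^ 2"
          by (rule power_mono[OF \<open>\<bar>\<phi> i - \<phi> j\<bar> \<le> Y\<close>]) simp
        then show ?thesis by simp
      qed
      then show ?thesis using A epsnn by (intro mult_mono) (auto simp: A_nonneg)
    qed
  qed
  have En_le: "En \<phi> \<le> real n * n * eps * Y^2 / 2"
  proof -
    have "(\<Sum>i<n. \<Sum>j<n. A i j * (\<phi> i - \<phi> j)^2) \<le> (\<Sum>i<n. \<Sum>j<n. eps * Y^2)"
      using trm by (intro sum_mono) auto
    then show ?thesis unfolding En_def by simp
  qed
  define tail where "tail = (\<Sum>c\<in>{k..<n}. (ip \<phi> c)^2)"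
  have tail_nn: "0 \<le> tail" unfolding tail_def by (simp add: sum_nonneg)
  have kn: "k < n" by (rule k_less)
  have "lam k * tail \<le> (\<Sum>c\<in>{k..<n}. lam c * (ip \<phi> c)^2)"
    unfolding tail_def sum_distrib_left
    by (intro sum_mono mult_right_mono lam_mono) auto
  also have "\<dots> \<le> (\<Sum>c<n. lam c * (ip \<phi> c)^2)"
    by (intro sum_mono2) (auto simp: lam_nonneg)
  also have "\<dots> = En \<phi>" by (rule Q_eq)
  finally have lt: "lam k * tail \<le> real n * n * eps * Y^2 / 2" using En_le by linarith
  have "w * tail \<le> 2 * (real k + 1) * real n ^ 3 * lam k * tail"
    using lam_lower tail_nn by (intro mult_right_mono) auto
  also have "\<dots> = 2 * (real k + 1) * real n ^ 3 * (lam k * tail)" by simp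
  also have "\<dots> \<le> 2 * (real k + 1) * real n ^ 3 * (real n * n * eps * Y^2 / 2)"
    using lt by (intro mult_left_mono) auto
  also have "\<dots> = (real k + 1) * real n ^ 5 * eta * w ^ 3 * Y^2"
    unfolding eps_eq by (simp add: power2_eq_square power3_eq_cube eval_nat_numeral)
  finally have wt: "w * tail \<le> (real k + 1) * real n ^ 5 * eta * w ^ 3 * Y^2" .
  have Yw: "Y \<le> 1 / w"
  proof -
    have "1 / vol m \<le> 1 / (2 * w)" "1 / vol m' \<le> 1 / (2 * w)"
      using vol_pos m m' w_pos vp by (auto intro!: divide_left_mono)
    then show ?thesis unfolding Y_def by simp
  qed
  have "w * Y \<le> 1" using Yw w_pos by (simp add: field_simps)
  then have "w ^ 3 * Y^2 \<le> w ^ 2 * Y"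
  proof -
    assume h: "w * Y \<le> 1"
    have "w ^ 3 * Y^2 = (w ^ 2 * Y) * (w * Y)" by (simp add: power2_eq_square power3_eq_cube)
    also have "\<dots> \<le> (w ^ 2 * Y) * 1" using h Ypos w_pos by (intro mult_left_mono) auto
    finally show ?thesis by simp
  qed
  then have "w * tail \<le> (real k + 1) * real n ^ 5 * eta * (w ^ 2 * Y)"
  proof -
    have c0: "0 \<le> (real k + 1) * real n ^ 5 * eta" using eta_pos by simp
    have X: "(real k + 1) * real n ^ 5 * eta * (w ^ 3 * Y^2) \<le> (real k + 1) * real n ^ 5 * eta * (w ^ 2 * Y)"
      by (rule mult_left_mono[OF \<open>w ^ 3 * Y^2 \<le> w ^ 2 * Y\<close> c0])
    have "w * tail \<le> (real k + 1) * real n ^ 5 * eta * (w ^ 3 * Y^2)" using wt by (simp only: mult.assoc)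
    then show ?thesis using X by (rule order_trans)
  qed
  then have "w * tail \<le> w * ((real k + 1) * real n ^ 5 * eta * w * Y)"
    by (simp add: power2_eq_square mult_ac)
  then have "tail \<le> (real k + 1) * real n ^ 5 * eta * w * Y"
    using w_pos by (rule mult_left_le_imp_le)
  also have "\<dots> \<le> (real k + 1) * real n ^ 5 * eta * 1 * Y"
    using w_le1 eta_pos Ypos by (intro mult_right_mono mult_left_mono) auto
  also have "\<dots> \<le> Y / 2"
  proof -
    have "(real k + 1) * real n ^ 5 * eta \<le> 1 / 2" using eta_small1 by (simp add: algebra_simps)
    then have "(real k + 1) * real n ^ 5 * eta * Y \<le> 1 / 2 * Y" using Ypos by (intro mult_right_mono) auto
    then show ?thesis by simp
  qed
  finally have tl: "tail \<le> Y / 2" .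
  have split: "(\<Sum>c<n. (ip \<phi> c)^2) = (\<Sum>c<k. (ip \<phi> c)^2) + tail"
    unfolding tail_def lessThan_atLeast0 using kn by (simp add: sum.atLeastLessThan_concat)
  have "Y / 2 \<le> (\<Sum>c<k. (ip \<phi> c)^2)" using split PY tl by linarith
  moreover have "1 / (2 * real n ^ 2) \<le> Y / 2"
  proof -
    have "1 / real n ^ 2 \<le> 1 / vol m" using vol_le[OF m] vp n_ge2 by (intro divide_left_mono) auto
    also have "\<dots> \<le> Y" unfolding Y_def using vp by simp
    finally show ?thesis by simp
  qed
  ultimately show ?thesis unfolding ipphi by linarith
qed

end

context setting begin

lemma emb_eq: "emb_dist k (degree \<alpha> \<sigma> x n) U a b = L2_set (\<lambda>c. f c a - f c b) {..<k}"
  unfolding emb_dist_def L2_set_def f_def D_def by simp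

lemma L2_neg: "L2_set (\<lambda>c. - g c) K = L2_set g K"
  unfolding L2_set_def by simp

lemma main:
  "\<forall>i<n. \<forall>j<n. \<forall>g<n. \<forall>h<n. \<forall>l<k. \<forall>m<k.
           x i \<in> C l \<and> x j \<in> C l \<and> x g \<in> C m \<and> x h \<notin> C m \<longrightarrow>
           emb_dist k (degree \<alpha> \<sigma> x n) U i j
             \<le> real n powr ((4 - z) / 2) * emb_dist k (degree \<alpha> \<sigma> x n) U g h"
proof (intro allI impI)
  fix i j g h l m
  assume lt: "i < n" "j < n" "g < n" "h < n" "l < k" "m < k"
    and mem: "x i \<in> C l \<and> x j \<in> C l \<and> x g \<in> C m \<and> x h \<notin> C m"
  have iI: "i \<in> I l" "j \<in> I l" using lt mem unfolding I_def by auto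
  have gI: "g \<in> I m" using lt mem unfolding I_def by auto
  have hn: "h \<notin> I m" using mem unfolding I_def by auto
  obtain m' where m': "m' < k" "h \<in> I m'" using cluster_ex[OF lt(4)] by auto
  have mm: "m \<noteq> m'" using m' hn by auto
  define N where "N = sqrt N2"
  have N2nn: "0 \<le> N2" unfolding N2_def using lamk1_nonneg w_pos by simp
  have Nnn: "0 \<le> N" unfolding N_def using N2nn by simp
  have L2le: "L2_set d {..<k} \<le> N" if "(\<Sum>c<k. (d c)^2) \<le> N2" for d
    unfolding L2_set_def N_def using that by simp
  define E1 where "E1 = L2_set (\<lambda>c. f c i - f c j) {..<k}"
  define E2 where "E2 = L2_set (\<lambda>c. f c g - f c h) {..<k}"
  have E1: "E1 \<le> N" unfolding E1_def by (rule L2le, rule within[OF lt(5) iI])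
  have d2: "L2_set (\<lambda>c. f c g - avg m c) {..<k} \<le> N" by (rule L2le, rule to_avg[OF lt(6) gI])
  have d3: "L2_set (\<lambda>c. f c h - avg m' c) {..<k} \<le> N" by (rule L2le, rule to_avg[OF m'])
  have G: "1 / (2 * real n) \<le> L2_set (\<lambda>c. avg m c - avg m' c) {..<k}"
  proof -
    have "(1 / (2 * real n))^2 \<le> 1 / (2 * real n ^ 2)"
      using n_ge2 by (simp add: power2_eq_square field_simps)
    also have "\<dots> \<le> (\<Sum>c<k. (avg m c - avg m' c)^2)" by (rule between[OF lt(6) m'(1) mm])
    finally show ?thesis unfolding L2_set_def by (rule real_le_rsqrt)
  qed
  have "L2_set (\<lambda>c. avg m c - avg m' c) {..<k}
      = L2_set (\<lambda>c. ((f c g - f c h) + - (f c g - avg m c)) + (f c h - avg m' c)) {..<k}"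
    by (intro L2_set_cong) auto
  also have "\<dots> \<le> L2_set (\<lambda>c. (f c g - f c h) + - (f c g - avg m c)) {..<k} + L2_set (\<lambda>c. f c h - avg m' c) {..<k}"
    by (rule L2_set_triangle_ineq)
  also have "\<dots> \<le> (E2 + L2_set (\<lambda>c. - (f c g - avg m c)) {..<k}) + L2_set (\<lambda>c. f c h - avg m' c) {..<k}"
    unfolding E2_def by (intro add_right_mono L2_set_triangle_ineq)
  also have "\<dots> \<le> E2 + N + N" unfolding L2_neg using d2 d3 by linarith
  finally have E2: "1 / (2 * real n) - 2 * N \<le> E2" using G by linarith
  define q where "q = real n powr ((4 - z) / 2)"
  have n1: "real n \<ge> 1" using n_ge2 by simp
  have q0: "0 \<le> q" unfolding q_def by simp
  have q1: "q \<le> 1" unfolding q_def using powr_mono2'[of "(4 - z) / 2" 1 "real n"] n1 z_ge by simp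
  have "q = real n powr ((4 - z) / 2)" by (fact q_def)
  have q2: "q ^ 2 = real n ^ 4 / real n powr z"
  proof -
    have n0: "real n \<noteq> 0" using n1 by simp
    have "q ^ 2 = real n powr (of_nat 2 * ((4 - z) / 2))" unfolding q_def by (rule powr_power[OF n0])
    also have "of_nat 2 * ((4 - z) / 2) = 4 - z" by simp
    also have "real n powr (4 - z) = real n powr 4 / real n powr z" by (rule powr_diff)
    also have "real n powr 4 = real n powr (real 4)" by simp
    also have "\<dots> = real n ^ 4" using n1 by (intro powr_realpow) simp
    finally show ?thesis .
  qed
  have nz: "0 < real n powr z" using n1 by simp
  have "(6 * real n * N)^2 = 36 * real n ^ 2 * N2"
    unfolding N_def using N2nn by (simp add: power_mult_distrib)
  also have "\<dots> \<le> 36 * real n ^ 2 * (2 * real k ^ 2 * real n ^ 2 * eta)"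
    using N2_bound by (intro mult_left_mono) auto
  also have "\<dots> = real n ^ 4 * (72 * real k ^ 2 * eta)"
  proof -
    have "real n ^ 4 = real n ^ 2 * real n ^ 2" by (simp flip: power_add)
    then show ?thesis by (simp add: algebra_simps)
  qed
  also have "\<dots> \<le> real n ^ 4 * (1 / real n powr z)"
  proof (rule mult_left_mono)
    show "72 * real k ^ 2 * eta \<le> 1 / real n powr z"
      using eta_small2 nz by (simp add: field_simps)
  qed simp
  also have "\<dots> = q ^ 2" unfolding q2 by simp
  finally have "6 * real n * N \<le> q" using q0 by (rule power2_le_imp_le)
  then have q3: "3 * N \<le> q / (2 * real n)" using n1 by (simp add: field_simps)
  have "E1 \<le> N" by (rule E1)
  also have "N \<le> q / (2 * real n) - 2 * q * N"
  proof -
    have "q * N \<le> 1 * N" using q1 Nnn by (intro mult_right_mono) auto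
    then show ?thesis using q3 by linarith
  qed
  also have "\<dots> = q * (1 / (2 * real n) - 2 * N)" by (simp add: algebra_simps)
  also have "\<dots> \<le> q * E2" using E2 q0 by (intro mult_left_mono) auto
  finally show "emb_dist k (degree \<alpha> \<sigma> x n) U i j
             \<le> real n powr ((4 - z) / 2) * emb_dist k (degree \<alpha> \<sigma> x n) U g h"
    unfolding emb_eq E1_def[symmetric] E2_def[symmetric] q_def[symmetric] .
qed

end

theorem lemma15:
  fixes x :: "nat \<Rightarrow> real ^ 'd"
    and C :: "nat \<Rightarrow> (real ^ 'd) set"
    and \<delta>l :: "nat \<Rightarrow> real"
    and n k :: nat and \<alpha> \<sigma> \<delta> z :: real
    and U :: "nat \<Rightarrow> nat \<Rightarrow> real" and lam :: "nat \<Rightarrow> real"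
  assumes alpha_pos: "\<alpha> > 0"
    and distinct_pts: "inj_on x {..<n}"
    and k_pos: "k \<ge> 1"
    and part_sub: "\<forall>l<k. C l \<subseteq> x ` {..<n}"
    and part_disj: "\<forall>l<k. \<forall>m<k. l \<noteq> m \<longrightarrow> C l \<inter> C m = {}"
    and part_cover: "(\<Union>l<k. C l) = x ` {..<n}"
    and card_ge2: "\<forall>l<k. card (C l) \<ge> 2"
    and conn: "\<forall>l<k. connected_at_distance (C l) (\<delta>l l)"
    and delta_def: "\<delta> = Min ((\<lambda>m. setdist (C m) (x ` {..<n} - C m) powr \<alpha>) ` {..<k})
                        - 3 * Max ((\<lambda>l. \<delta>l l powr \<alpha>) ` {..<k})"
    and delta_pos: "\<delta> > 0"
    and eig: "ordered_eigenbasis n (norm_laplacian \<alpha> \<sigma> x n) U lam"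
    and z_ge: "z \<ge> 10"
    and sigma_pos: "\<sigma> > 0"
    and sigma_bound: "\<sigma> < \<delta> powr (1 / \<alpha>) * ln (13 ^ 8 * real k ^ 9 * real n powr z) powr (- 1 / \<alpha>)"
  shows "\<forall>i<n. \<forall>j<n. \<forall>g<n. \<forall>h<n. \<forall>l<k. \<forall>m<k.
           x i \<in> C l \<and> x j \<in> C l \<and> x g \<in> C m \<and> x h \<notin> C m \<longrightarrow>
           emb_dist k (degree \<alpha> \<sigma> x n) U i j
             \<le> real n powr ((4 - z) / 2) * emb_dist k (degree \<alpha> \<sigma> x n) U g h"
  proof -
  have S: "setting x C \<delta>l n k \<alpha> \<sigma> \<delta> z U lam"
    unfolding setting_def using assms by blast
  show ?thesis by (rule setting.main[OF S])
qed

end
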